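(* Let $\mathbf{A}\in\mathbb{R}^{(\ell m)\times(qn)}$ be a block matrix with $\ell\times q$ blocks of size $m\times n$, and let $\mathbf{B}=\mathbf{S}_{\ell,m}\mathbf{A}\mathbf{S}_{q,n}^\top$, viewed as an $m\times n$ grid of blocks of size $\ell\times q$. Let $\mathscr{A}\subseteq\mathbb{R}^{m\times n}$ be the span of the blocks of $\mathbf{A}$ and $\mathscr{B}\subseteq\mathbb{R}^{\ell\times q}$ the span of the blocks of $\mathbf{B}$. Then $\dim(\mathscr{A})=\dim(\mathscr{B})$.
   Context: Blocks of $\mathbf{A}$: $\mathbf{A}^{(\gamma,\delta)}_{\alpha\beta}=\mathbf{A}_{(\gamma-1)m+\alpha,(\delta-1)n+\beta}$ for $(\gamma,\delta)\in[\ell]\times[q]$, $(\alpha,\beta)\in[m]\times[n]$. Blocks of $\mathbf{B}$: $\mathbf{B}^{(\alpha,\beta)}_{\gamma\delta}=\mathbf{B}_{(\alpha-1)\ell+\gamma,(\beta-1)q+\delta}$. For $a,b\ge 1$ and $s=ab$, the shuffle permutation matrix $\mathbf{S}_{a,b}\in\mathbb{R}^{s\times s}$ has row $(i-1)a+j$ equal to $\mathbf{e}_{(j-1)b+i}^\top$ for $i\in[b]$, $j\in[a]$ (the rows of $\mathbf{I}_s$ with indices $i,i+b,\dots,i+(a-1)b$, stacked for $i=1,\dots,b$). In the paper's terminology, $\mathscr{A}$ (spanned by the distinct blocks of $\mathbf{A}$) is the inner blockspan and $\mathscr{B}$ (spanned by the distinct blocks of $\mathbf{B}$) is the outer blockspan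 of $\mathbf{A}$. *)

theory Defs
  imports "HOL-Analysis.Analysis" "HOL-Library.Function_Algebras"
begin

text \<open>Matrices are represented as functions nat \<Rightarrow> nat \<Rightarrow> real with explicit
  dimensions and 0-based indices; entries outside the stated range are irrelevant
  (blocks are taken to be zero outside their range).\<close>

type_synonym rmat = "nat \<Rightarrow> nat \<Rightarrow> real"

definition mscale :: "real \<Rightarrow> rmat \<Rightarrow> rmat" where
  "mscale r M = (\<lambda>i j. r * M i j)"

definition mdim :: "rmat set \<Rightarrow> nat" where
  "mdim S = vector_space.dim mscale S"

definition mspan :: "rmat set \<Rightarrow> rmat set" where
  "mspan S = module.span mscale S"

definition mmult :: "nat \<Rightarrow> rmat \<Rightarrow> rmat \<Rightarrow> rmat" where
  "mmult k M N = (\<lambda>i j. \<Sum>t<k. M i t * N t j)"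

definition mtrans :: "rmat \<Rightarrow> rmat" where
  "mtrans M = (\<lambda>i j. M j i)"

text \<open>Shuffle permutation S_{a,b} (size ab): 1-based row (i-1)a+j equals
  e_{(j-1)b+i}^T for i in [b], j in [a]; 0-based: row i*a+j has its 1 in column j*b+i.\<close>
definition shuffle :: "nat \<Rightarrow> nat \<Rightarrow> rmat" where
  "shuffle a b = (\<lambda>r c. if r < a * b \<and> c < a * b \<and> c = (r mod a) * b + r div a
                        then 1 else 0)"

definition block :: "nat \<Rightarrow> nat \<Rightarrow> rmat \<Rightarrow> nat \<Rightarrow> nat \<Rightarrow> rmat" where
  "block m n M g d = (\<lambda>al be. if al < m \<and> be < n then M (g * m + al) (d * n + be) else 0)"

definition blockspan :: "nat \<Rightarrow> nat \<Rightarrow> nat \<Rightarrow> nat \<Rightarrow> rmat \<Rightarrow> rmat set" where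
  "blockspan l q m n M = mspan {block m n M g d | g d. g < l \<and> d < q}"

end

theory Submission
  imports Defs
begin

lemma sum_rmat_apply: "(sum (f :: 'x \<Rightarrow> rmat) S) a b = (\<Sum>w\<in>S. f w a b)"
  by (induct S rule: infinite_finite_induct) auto

interpretation M: vector_space mscale
  by unfold_locales (auto simp: mscale_def fun_eq_iff algebra_simps)

lemma mdim_eq: "mdim S = M.dim S" by (simp add: mdim_def)
lemma mspan_eq: "mspan S = M.span S" by (simp add: mspan_def)

definition rowT :: "nat \<Rightarrow> nat \<Rightarrow> (nat \<Rightarrow> nat \<Rightarrow> nat \<Rightarrow> nat \<Rightarrow> real) \<Rightarrow> nat \<Rightarrow> nat \<Rightarrow> rmat" where
  "rowT m n T g d = (\<lambda>a b. if a < m \<and> b < n then T g d a b else 0)"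

lemma rank_le:
  fixes T :: "nat \<Rightarrow> nat \<Rightarrow> nat \<Rightarrow> nat \<Rightarrow> real"
  shows "M.dim {rowT m n T g d | g d. g < l \<and> d < q}
       \<le> M.dim {rowT l q (\<lambda>a b g d. T g d a b) a b | a b. a < m \<and> b < n}"
proof -
  let ?R = "{rowT m n T g d | g d. g < l \<and> d < q}"
  let ?C = "{rowT l q (\<lambda>a b g d. T g d a b) a b | a b. a < m \<and> b < n}"
  have finC: "finite ?C"
  proof -
    have "?C = (\<lambda>(a,b). rowT l q (\<lambda>a b g d. T g d a b) a b) ` ({..<m} \<times> {..<n})" by auto
    then show ?thesis by simp
  qed
  obtain Bs where Bs: "Bs \<subseteq> ?C" "M.independent Bs" "?C \<subseteq> M.span Bs" "card Bs = M.dim ?C"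
    using M.basis_exists by blast
  have finB: "finite Bs" using M.independent_span_bound[OF finC Bs(2)] Bs(1) M.span_superset by blast
  have ex: "\<exists>u. rowT l q (\<lambda>a b g d. T g d a b) a b = (\<Sum>w\<in>Bs. mscale (u w) w)"
    if "a < m" "b < n" for a b
  proof -
    have "rowT l q (\<lambda>a b g d. T g d a b) a b \<in> M.span Bs" using Bs(3) that by blast
    then show ?thesis using M.span_finite[OF finB] by auto
  qed
  define x where "x a b = (SOME u. rowT l q (\<lambda>a b g d. T g d a b) a b = (\<Sum>w\<in>Bs. mscale (u w) w))" for a b
  have x: "rowT l q (\<lambda>a b g d. T g d a b) a b = (\<Sum>w\<in>Bs. mscale (x a b w) w)"
    if "a < m" "b < n" for a b
    unfolding x_def by (rule someI_ex[OF ex[OF that]])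
  define X where "X w = (\<lambda>a b. if a < m \<and> b < n then x a b w else 0)" for w
  have "?R \<subseteq> M.span (X ` Bs)"
  proof
    fix r assume "r \<in> ?R"
    then obtain g d where gd: "g < l" "d < q" "r = rowT m n T g d" by auto
    have "r = (\<Sum>w\<in>Bs. mscale (w g d) (X w))"
    proof (intro ext)
      fix a b
      show "r a b = (\<Sum>w\<in>Bs. mscale (w g d) (X w)) a b"
      proof (cases "a < m \<and> b < n")
        case True
        have "T g d a b = rowT l q (\<lambda>a b g d. T g d a b) a b g d"
          using gd by (simp add: rowT_def)
        also have "\<dots> = (\<Sum>w\<in>Bs. x a b w * w g d)"
          using x[of a b] True by (simp add: sum_rmat_apply mscale_def)
        finally show ?thesis using True gd
          by (simp add: sum_rmat_apply mscale_def X_def rowT_def mult.commute)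
      next
        case False
        then show ?thesis using gd
          by (auto simp: sum_rmat_apply mscale_def X_def rowT_def)
      qed
    qed
    also have "\<dots> \<in> M.span (X ` Bs)"
      by (intro M.span_sum M.span_scale M.span_base) auto
    finally show "r \<in> M.span (X ` Bs)" .
  qed
  then have "M.dim ?R \<le> card (X ` Bs)" using M.dim_le_card finB by blast
  also have "\<dots> \<le> card Bs" using finB card_image_le by blast
  finally show ?thesis using Bs(4) by simp
qed

theorem theorem2:
  fixes l q m n :: nat and A :: rmat
  defines "B \<equiv> mmult (q * n) (mmult (l * m) (shuffle l m) A) (mtrans (shuffle q n))"
  shows "mdim (blockspan l q m n A) = mdim (blockspan m n l q B)"
proof -
  define T where "T g d a b = A (g * m + a) (d * n + b)" for g d a b
  have SA: "mmult (l * m) (shuffle l m) A r t = A ((r mod l) * m + r div l) t" if "r < l * m" for r t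
  proof -
    have lt: "(r mod l) * m + r div l < l * m"
    proof -
      have "l > 0" using that by (cases l) auto
      have "r div l < m" using that by (intro less_mult_imp_div_less) (simp add: mult.commute)
      moreover have "r mod l < l" using \<open>l > 0\<close> by simp
      ultimately have "(r mod l) * m + r div l < (r mod l) * m + m" by simp
      also have "\<dots> = (r mod l + 1) * m" by simp
      also have "\<dots> \<le> l * m" using \<open>r mod l < l\<close> by (intro mult_right_mono) auto
      finally show ?thesis .
    qed
    have "mmult (l * m) (shuffle l m) A r t = (\<Sum>s<l*m. (if s = (r mod l) * m + r div l then A s t else 0))"
      unfolding mmult_def shuffle_def using that by (intro sum.cong) auto
    also have "\<dots> = A ((r mod l) * m + r div l) t" using lt by simp
    finally show ?thesis .
  qed
  have Bv: "B r s = A ((r mod l) * m + r div l) ((s mod q) * n + s div q)"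
    if "r < l * m" "s < q * n" for r s
  proof -
    have lt: "(s mod q) * n + s div q < q * n"
    proof -
      have "q > 0" using that by (cases q) auto
      have "s div q < n" using that by (intro less_mult_imp_div_less) (simp add: mult.commute)
      moreover have "s mod q < q" using \<open>q > 0\<close> by simp
      ultimately have "(s mod q) * n + s div q < (s mod q) * n + n" by simp
      also have "\<dots> = (s mod q + 1) * n" by simp
      also have "\<dots> \<le> q * n" using \<open>s mod q < q\<close> by (intro mult_right_mono) auto
      finally show ?thesis .
    qed
    have "B r s = (\<Sum>t<q*n. (if t = (s mod q) * n + s div q then mmult (l * m) (shuffle l m) A r t else 0))"
      unfolding B_def mmult_def[of "q*n"] mtrans_def shuffle_def[of q n] using that
      by (intro sum.cong) auto
    also have "\<dots> = mmult (l * m) (shuffle l m) A r ((s mod q) * n + s div q)" using lt by simp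
    finally show ?thesis using SA that by simp
  qed
  have blkA: "{block m n A g d | g d. g < l \<and> d < q} = {rowT m n T g d | g d. g < l \<and> d < q}"
    unfolding block_def rowT_def T_def by simp
  have eqB: "block l q B a b = rowT l q (\<lambda>a b g d. T g d a b) a b" if "a < m" "b < n" for a b
  proof (intro ext)
    fix g d
    show "block l q B a b g d = rowT l q (\<lambda>a b g d. T g d a b) a b g d"
    proof (cases "g < l \<and> d < q")
      case True
      have r: "a * l + g < l * m"
      proof -
        have "a * l + g < a * l + l" using True by simp
        also have "\<dots> = (a + 1) * l" by simp
        also have "\<dots> \<le> m * l" using that by (intro mult_right_mono) auto
        finally show ?thesis by (simp add: mult.commute)
      qed
      have s: "b * q + d < q * n"
      proof -
        have "b * q + d < b * q + q" using True by simp
        also have "\<dots> = (b + 1) * q" by simp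
        also have "\<dots> \<le> n * q" using that by (intro mult_right_mono) auto
        finally show ?thesis by (simp add: mult.commute)
      qed
      have "(a * l + g) mod l = g" "(a * l + g) div l = a" using True by auto
      moreover have "(b * q + d) mod q = d" "(b * q + d) div q = b" using True by auto
      ultimately show ?thesis using True Bv[OF r s] by (simp add: block_def rowT_def T_def)
    qed (auto simp: block_def rowT_def)
  qed
  have blkB: "{block l q B a b | a b. a < m \<and> b < n} = {rowT l q (\<lambda>a b g d. T g d a b) a b | a b. a < m \<and> b < n}"
    using eqB by (smt (verit) Collect_cong)
  have swap: "{rowT m n (\<lambda>a b g d. (\<lambda>a b g d. T g d a b) g d a b) g d | g d. g < l \<and> d < q}
      = {rowT m n T g d | g d. g < l \<and> d < q}" by simp
  have 1: "M.dim {rowT m n T g d | g d. g < l \<and> d < q}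
       \<le> M.dim {rowT l q (\<lambda>a b g d. T g d a b) a b | a b. a < m \<and> b < n}" by (rule rank_le)
  have 2: "M.dim {rowT l q (\<lambda>a b g d. T g d a b) a b | a b. a < m \<and> b < n}
       \<le> M.dim {rowT m n T g d | g d. g < l \<and> d < q}"
    using rank_le[of l q "\<lambda>a b g d. T g d a b" m n] by simp
  show ?thesis unfolding blockspan_def mdim_eq mspan_eq M.dim_span blkA blkB using 1 2 by simp
qed

end
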